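(* Let $p$ be an odd prime, let $v$ be an integer with $1<v<p-1$, let $g\in\{2,\dots,p-1\}$ be a primitive root modulo $p$, and let $t\ge 1$. For $z=(z(0),\dots,z(t-1))\in\{0,\dots,v-1\}^t$ let $$\lambda(z)=\#\{x\in\{0,1,\dots,p-2\}:\ (g^{x+\iota}\,\%\,p)\,\%\,v=z(\iota)\text{ for all }0\le\iota<t\}.$$ Write $p=q\,g^{t-1}+r$ with integers $q\ge 0$ and $0\le r<g^{t-1}$. Then for every $z\in\{0,\dots,v-1\}^t$, $$\left\lfloor \frac{g}{v}\right\rfloor^{t-1}\left\lfloor\frac{q}{v}\right\rfloor\ \le\ \lambda(z)\ \le\ \left\lceil\frac{g}{v}\right\rceil^{t-1}\left(\left\lfloor\frac{q}{v}\right\rfloor+1\right).$$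
   Context: For integers $x$ and $m\ge1$, $x\,\%\,m$ denotes the least nonnegative remainder of $x$ modulo $m$. Thus $\lambda(z)$ is the number of (cyclic) occurrences of the tuple $z$ in the periodic sequence $\big((g^{i}\,\%\,p)\,\%\,v\big)_{i}$ of period $p-1$. *)

theory Defs
  imports "HOL-Number_Theory.Number_Theory"
begin

definition pattern_count :: "nat \<Rightarrow> nat \<Rightarrow> nat \<Rightarrow> nat \<Rightarrow> (nat \<Rightarrow> nat) \<Rightarrow> nat" where
  "pattern_count p g v t z =
     card {x \<in> {0..p-2}. \<forall>i<t. (g ^ (x + i) mod p) mod v = z i}"

end

theory Submission
  imports Defs
begin


lemma ceil_nat_div:
  fixes g v :: nat assumes "v > 0"
  shows "real_of_int \<lceil>real g / real v\<rceil> = real ((g + v - 1) div v)"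
proof -
  have "\<lceil>real g / real v\<rceil> = int ((g + v - 1) div v)"
  proof (rule ceiling_unique)
    have "g \<le> v * ((g + v - 1) div v)"
      using assms by (metis One_nat_def Suc_pred add.commute add_diff_cancel_right' add_gr_0 dividend_less_div_times le_diff_conv less_eq_Suc_le mult.commute)
    then show "real g / real v \<le> real_of_int (int ((g + v - 1) div v))"
      using assms by (simp add: divide_le_eq mult.commute flip: of_nat_mult)
    have "v * ((g + v - 1) div v) < g + v"
      using assms by (meson add_gr_0 diff_less order_le_less_trans times_div_less_eq_dividend zero_less_one)
    then show "real_of_int (int ((g + v - 1) div v)) - 1 < real g / real v"
      using assms by (simp add: less_divide_eq field_simps flip: of_nat_mult)
  qed
  then show ?thesis by simp
qed

lemma cnt_le1:
  fixes v c a L :: nat assumes "L \<le> v"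
  shows "card {x \<in> {a..<a+L}. x mod v = c} \<le> 1"
proof -
  have "\<forall>x\<in>{x \<in> {a..<a+L}. x mod v = c}. \<forall>y\<in>{x \<in> {a..<a+L}. x mod v = c}. x = y"
  proof (intro ballI)
    fix x y assume x: "x \<in> {x \<in> {a..<a+L}. x mod v = c}" and y: "y \<in> {x \<in> {a..<a+L}. x mod v = c}"
    show "x = y"
    proof (rule ccontr)
      assume ne: "x \<noteq> y"
      { fix x y :: nat assume "x < y" "x mod v = y mod v" "y - x < v"
        then have "v dvd y - x" using mod_eq_dvd_iff_nat[of x y v] by simp
        then have False using dvd_imp_le[of v "y - x"] \<open>x < y\<close> \<open>y - x < v\<close> by simp }
      note * = this
      from x y assms have "x mod v = y mod v" "y - x < v" "x - y < v" by auto
      with ne * show False by (metis linorder_neqE_nat)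
    qed
  qed
  then show ?thesis using card_le_Suc0_iff_eq[of "{x \<in> {a..<a+L}. x mod v = c}"] by simp
qed

lemma cnt_ex:
  fixes v c a :: nat assumes "c < v"
  shows "\<exists>x \<in> {a..<a+v}. x mod v = c"
proof -
  define x where "x = a + (c + v - a mod v) mod v"
  have "x mod v = (a + (c + v - a mod v)) mod v" unfolding x_def by (simp add: mod_add_right_eq)
  also have "a + (c + v - a mod v) = v * (a div v) + c + v"
    using assms by (metis (no_types, lifting) ab_semigroup_add_class.add_ac(1) add_diff_inverse_nat div_mod_decomp less_numeral_extra(3) minus_mod_eq_div_mult minus_mod_eq_mult_div mod_less_divisor nat_diff_split_asm trans_less_add2 zero_less_diff)
  also have "(v * (a div v) + c + v) mod v = c" using assms by simp
  finally show ?thesis using assms unfolding x_def by (intro bexI[of _ x]) (auto simp: x_def)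
qed

lemma cnt_bounds:
  fixes v c a L :: nat assumes "c < v"
  shows "L div v \<le> card {x \<in> {a..<a+L}. x mod v = c} \<and> card {x \<in> {a..<a+L}. x mod v = c} \<le> (L + v - 1) div v"
  using assms
proof (induction L arbitrary: a rule: less_induct)
  case (less L)
  show ?case
  proof (cases "L < v")
    case True
    have "card {x \<in> {a..<a+L}. x mod v = c} \<le> 1" using True by (intro cnt_le1) simp
    moreover have "L = 0 \<Longrightarrow> card {x \<in> {a..<a+L}. x mod v = c} = 0" by simp
    moreover have "L > 0 \<Longrightarrow> 1 \<le> (L + v - 1) div v"
    proof -
      assume "L > 0"
      then have "v div v \<le> (L + v - 1) div v" by (intro div_le_mono) simp
      then show ?thesis using less.prems by simp
    qed
    ultimately show ?thesis using True by fastforce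
  next
    case False
    have v0: "v > 0" using less.prems by simp
    have split: "{x \<in> {a..<a+L}. x mod v = c} = {x \<in> {a..<a+v}. x mod v = c} \<union> {x \<in> {(a+v)..<(a+v)+(L-v)}. x mod v = c}"
      using False by auto
    have c1: "card {x \<in> {a..<a+v}. x mod v = c} = 1"
    proof -
      have "card {x \<in> {a..<a+v}. x mod v = c} \<noteq> 0" using cnt_ex[OF less.prems, of a] by auto
      then show ?thesis using cnt_le1[of v v a c] by linarith
    qed
    have "card {x \<in> {a..<a+L}. x mod v = c} = 1 + card {x \<in> {(a+v)..<(a+v)+(L-v)}. x mod v = c}"
      unfolding split c1[symmetric] by (rule card_Un_disjoint) auto
    moreover have ih: "(L - v) div v \<le> card {x \<in> {(a+v)..<(a+v)+(L-v)}. x mod v = c} \<and> card {x \<in> {(a+v)..<(a+v)+(L-v)}. x mod v = c} \<le> (L - v + v - 1) div v"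
      using less.IH[of "L - v" "a + v"] less.prems v0 False by simp
    moreover have "L div v = (L - v) div v + 1" using False v0 by (simp add: div_if)
    moreover have "(L + v - 1) div v = (L - v + v - 1) div v + 1" using False v0
      by (metis Nat.add_diff_assoc2 One_nat_def add.commute add_diff_inverse_nat bot_nat_0.not_eq_extremum div_add_self2 less_eq_Suc_le)
    ultimately show ?thesis by simp
  qed
qed



lemma digit_set_Suc:
  fixes g :: nat assumes "g > 0"
  shows "{K \<in> {..<g^Suc n}. \<forall>j<Suc n. (K div g^j) mod g mod v = e j}
       = (\<lambda>(d,K'). d + g*K') ` ({d \<in> {..<g}. d mod v = e 0} \<times> {K \<in> {..<g^n}. \<forall>j<n. (K div g^j) mod g mod v = e (Suc j)})"
proof (intro equalityI subsetI)
  fix K assume K: "K \<in> {K \<in> {..<g^Suc n}. \<forall>j<Suc n. (K div g^j) mod g mod v = e j}"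
  have "K = K mod g + g * (K div g)" by simp
  moreover have "K mod g \<in> {d \<in> {..<g}. d mod v = e 0}" using K assms by auto
  moreover have "K div g < g^n" using K assms by (simp add: div_less_iff_less_mult mult.commute)
  moreover have "\<forall>j<n. (K div g div g^j) mod g mod v = e (Suc j)"
  proof (intro allI impI)
    fix j assume "j < n"
    then have "(K div g^Suc j) mod g mod v = e (Suc j)" using K by auto
    then show "(K div g div g^j) mod g mod v = e (Suc j)" by (simp add: div_mult2_eq)
  qed
  ultimately show "K \<in> (\<lambda>(d,K'). d + g*K') ` ({d \<in> {..<g}. d mod v = e 0} \<times> {K \<in> {..<g^n}. \<forall>j<n. (K div g^j) mod g mod v = e (Suc j)})"
    by (intro image_eqI[of _ _ "(K mod g, K div g)"]) auto
next
  fix K assume "K \<in> (\<lambda>(d,K'). d + g*K') ` ({d \<in> {..<g}. d mod v = e 0} \<times> {K \<in> {..<g^n}. \<forall>j<n. (K div g^j) mod g mod v = e (Suc j)})"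
  then obtain d K' where K: "K = d + g*K'" and d: "d < g" "d mod v = e 0"
    and K': "K' < g^n" "\<forall>j<n. (K' div g^j) mod g mod v = e (Suc j)" by auto
  have md: "K mod g = d" "K div g = K'" using K d assms by auto
  have "K < g * (K' + 1)" using K d by simp
  also have "g * (K' + 1) \<le> g * g^n" using K' by (intro mult_le_mono2) simp
  finally have "K < g^Suc n" by simp
  moreover have "\<forall>j<Suc n. (K div g^j) mod g mod v = e j"
  proof (intro allI impI)
    fix j assume j: "j < Suc n"
    show "(K div g^j) mod g mod v = e j"
    proof (cases j)
      case 0 then show ?thesis using md d by simp
    next
      case (Suc i)
      then have "(K div g^j) = K' div g^i" using md by (simp add: div_mult2_eq)
      then show ?thesis using K' j Suc by simp
    qed
  qed
  ultimately show "K \<in> {K \<in> {..<g^Suc n}. \<forall>j<Suc n. (K div g^j) mod g mod v = e j}" by simp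
qed

lemma digit_count:
  fixes g v n :: nat and e :: "nat \<Rightarrow> nat"
  assumes "v > 0" "g > 0" "\<forall>j. e j < v"
  shows "(g div v)^n \<le> card {K \<in> {..<g^n}. \<forall>j<n. (K div g^j) mod g mod v = e j}
       \<and> card {K \<in> {..<g^n}. \<forall>j<n. (K div g^j) mod g mod v = e j} \<le> ((g+v-1) div v)^n"
  using assms(3)
proof (induction n arbitrary: e)
  case 0
  have "{K \<in> {..<g^0}. \<forall>j<0. (K div g^j) mod g mod v = e j} = {0}" by auto
  then show ?case by simp
next
  case (Suc n)
  let ?A = "{d \<in> {..<g}. d mod v = e 0}"
  let ?B = "{K \<in> {..<g^n}. \<forall>j<n. (K div g^j) mod g mod v = e (Suc j)}"
  have inj: "inj_on (\<lambda>(d,K'). d + g*K') (?A \<times> ?B)"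
  proof (rule inj_onI)
    fix x y assume x: "x \<in> ?A \<times> ?B" and y: "y \<in> ?A \<times> ?B"
      and eq: "(\<lambda>(d,K'). d + g*K') x = (\<lambda>(d,K'). d + g*K') y"
    obtain d K' where xd: "x = (d, K')" by fastforce
    obtain d' K'' where yd: "y = (d', K'')" by fastforce
    have dd: "d < g" "d' < g" using x y xd yd by auto
    have e2: "d + g*K' = d' + g*K''" using eq xd yd by simp
    then have "(d + g*K') mod g = (d' + g*K'') mod g" "(d + g*K') div g = (d' + g*K'') div g" by auto
    then show "x = y" using dd xd yd assms(2) by auto
  qed
  have card_eq: "card {K \<in> {..<g^Suc n}. \<forall>j<Suc n. (K div g^j) mod g mod v = e j} = card ?A * card ?B"
    unfolding digit_set_Suc[OF assms(2)] card_image[OF inj] card_cartesian_product ..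
  have "{..<g} = {0..<0+g}" by auto
  then have A: "g div v \<le> card ?A \<and> card ?A \<le> (g + v - 1) div v"
    using cnt_bounds[of "e 0" v g 0] Suc.prems by simp
  have B: "(g div v)^n \<le> card ?B \<and> card ?B \<le> ((g+v-1) div v)^n"
    using Suc.IH[of "\<lambda>j. e (Suc j)"] Suc.prems by simp
  show ?case unfolding card_eq using A B by (simp add: mult_le_mono)
qed



lemma cond_chain:
  assumes "\<And>i. i < n \<Longrightarrow> P i \<Longrightarrow> (P (Suc i) \<longleftrightarrow> Q i)"
  shows "(\<forall>i<Suc n. P i) \<longleftrightarrow> P 0 \<and> (\<forall>i<n. Q i)"
  using assms
proof (induction n)
  case 0 then show ?case by simp
next
  case (Suc n)
  have "(\<forall>i<Suc (Suc n). P i) \<longleftrightarrow> (\<forall>i<Suc n. P i) \<and> P (Suc n)" by (auto simp: less_Suc_eq)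
  also have "\<dots> \<longleftrightarrow> P 0 \<and> (\<forall>i<n. Q i) \<and> Q n"
    using Suc.IH Suc.prems[of n] Suc.prems by auto
  finally show ?case by (auto simp: less_Suc_eq)
qed

lemma solve_c:
  fixes p v :: nat and w :: int
  assumes "coprime p v" "v > 0"
  shows "\<exists>c<v. \<forall>d::nat. (int v dvd int p * int d - w) \<longleftrightarrow> d mod v = c"
proof -
  have "coprime (int p) (int v)" using assms by simp
  then obtain s where s: "[int p * s = 1] (mod int v)" using cong_solve_coprime_int by blast
  define c where "c = nat ((s * w) mod int v)"
  have cv: "c < v" using assms unfolding c_def by (simp add: nat_less_iff)
  have "(int v dvd int p * int d - w) \<longleftrightarrow> d mod v = c" for d
  proof -
    have "(int v dvd int p * int d - w) \<longleftrightarrow> [int p * int d = w] (mod int v)"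
      by (simp add: cong_iff_dvd_diff)
    also have "\<dots> \<longleftrightarrow> [int d = s * w] (mod int v)"
    proof
      assume h: "[int p * int d = w] (mod int v)"
      have "[s * (int p * int d) = s * w] (mod int v)" using h by (rule cong_scalar_left)
      moreover have "[s * (int p * int d) = int d] (mod int v)"
        using cong_scalar_right[OF s, of "int d"] by (simp add: ac_simps)
      ultimately show "[int d = s * w] (mod int v)" by (meson cong_sym cong_trans)
    next
      assume h: "[int d = s * w] (mod int v)"
      have "[int p * int d = int p * (s * w)] (mod int v)" using h by (rule cong_scalar_left)
      moreover have "[int p * (s * w) = w] (mod int v)"
        using cong_scalar_right[OF s, of w] by (simp add: ac_simps)
      ultimately show "[int p * int d = w] (mod int v)" by (rule cong_trans)
    qed
    also have "\<dots> \<longleftrightarrow> int d mod int v = (s * w) mod int v" by (simp add: cong_def)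
    also have "\<dots> \<longleftrightarrow> d mod v = c" unfolding c_def
      using assms by (metis nat_int of_nat_mod int_nat_eq pos_mod_sign of_nat_0_less_iff)
    finally show ?thesis .
  qed
  with cv show ?thesis by blast
qed

lemma mod_eq_dvd_int:
  fixes y z v :: nat assumes "z < v"
  shows "y mod v = z \<longleftrightarrow> int v dvd int y - int z"
proof -
  have "y mod v = z \<longleftrightarrow> y mod v = z mod v" using assms by simp
  also have "\<dots> \<longleftrightarrow> [int y = int z] (mod int v)" by (simp add: cong_def flip: of_nat_mod)
  also have "\<dots> \<longleftrightarrow> int v dvd int y - int z" by (simp add: cong_iff_dvd_diff)
  finally show ?thesis .
qed

lemma ceil_le_iff:
  fixes m G y :: nat assumes "G > 0"
  shows "(m + G - 1) div G \<le> y \<longleftrightarrow> m \<le> G * y"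
proof -
  have "(m + G - 1) div G \<le> y \<longleftrightarrow> (m + G - 1) div G < Suc y" by linarith
  also have "\<dots> \<longleftrightarrow> m + G - 1 < Suc y * G" by (rule div_less_iff_less_mult[OF assms])
  also have "\<dots> \<longleftrightarrow> m \<le> G * y" using assms by (simp add: algebra_simps, linarith)
  finally show ?thesis .
qed

lemma div_eq_iff_bounds:
  fixes G y p K :: nat assumes "p > 0"
  shows "G * y div p = K \<longleftrightarrow> K * p \<le> G * y \<and> G * y < Suc K * p"
  by (meson assms div_less_iff_less_mult div_times_less_eq_dividend le_less_Suc_eq less_eq_div_iff_mult_less_eq)



lemma digit_a:
  fixes p g y i :: nat
  shows "int (g^(Suc i)*y mod p) = int g * int (g^i*y mod p) - int p * int (g*(g^i*y mod p) div p)"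
proof -
  have "g^(Suc i)*y mod p = (g * (g^i*y mod p)) mod p"
    by (simp add: mod_mult_right_eq mult.assoc)
  moreover have "g * (g^i*y mod p) = p * (g*(g^i*y mod p) div p) + (g * (g^i*y mod p)) mod p" by simp
  ultimately show ?thesis by (metis add_diff_cancel_left' of_nat_add of_nat_mult)
qed

lemma digit_b:
  fixes p g y i :: nat assumes "p > 0"
  shows "g^(Suc i)*y div p = g*(g^i*y div p) + g*(g^i*y mod p) div p"
proof -
  have "g^(Suc i)*y = g * (g^i*y)" by simp
  also have "\<dots> = g * (p * (g^i*y div p) + g^i*y mod p)" by (simp only: mult_div_mod_eq)
  also have "\<dots> = p * (g * (g^i*y div p)) + g * (g^i*y mod p)" by (simp only: distrib_left mult.left_commute[of g p])
  also have "\<dots> = p * (g * (g^i*y div p)) + (p * (g*(g^i*y mod p) div p) + (g * (g^i*y mod p)) mod p)"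
    by (simp only: mult_div_mod_eq)
  also have "\<dots> = p * (g * (g^i*y div p) + g*(g^i*y mod p) div p) + (g * (g^i*y mod p)) mod p"
    by (simp add: algebra_simps)
  finally have "g^(Suc i)*y div p = (p * (g * (g^i*y div p) + g*(g^i*y mod p) div p) + (g * (g^i*y mod p)) mod p) div p"
    by simp
  also have "\<dots> = g * (g^i*y div p) + g*(g^i*y mod p) div p" using assms by simp
  finally show ?thesis .
qed

lemma digit_c:
  fixes p g y i :: nat assumes "p > 0" "g > 0"
  shows "g*(g^i*y mod p) div p < g"
  using assms by (simp add: div_less_iff_less_mult)

lemma digit_mod:
  fixes p g y i :: nat assumes "p > 0" "g > 0"
  shows "g*(g^i*y mod p) div p = (g^(Suc i)*y div p) mod g"
  using digit_b[OF assms(1), of g i y] digit_c[OF assms, of i y] by simp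

lemma digit_from_K:
  fixes p g y k n :: nat assumes "g > 0" "k \<le> n"
  shows "g^k*y div p = (g^n*y div p) div g^(n - k)"
proof -
  have "g^n = g^(n-k) * g^k" using assms by (simp flip: power_add)
  then have "(g^n*y div p) div g^(n - k) = (g^(n-k) * (g^k*y)) div (g^(n-k) * p)"
    by (simp add: div_mult2_eq mult.assoc mult.commute)
  also have "\<dots> = g^k*y div p" using assms by (simp add: div_mult_mult1)
  finally show ?thesis by simp
qed



lemma reindex_all:
  fixes n :: nat
  shows
  "(\<forall>i<n. R (n - 1 - i) i) \<longleftrightarrow> (\<forall>j<n. R j (n - 1 - j))"
proof
  assume h: "\<forall>i<n. R (n - 1 - i) i"
  show "\<forall>j<n. R j (n - 1 - j)"
  proof (intro allI impI)
    fix j assume "j < n"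
    have e1: "n - 1 - (n - 1 - j) = j" using \<open>j < n\<close> by arith
    have e2: "n - 1 - j < n" using \<open>j < n\<close> by arith
    note e1 e2
    then show "R j (n - 1 - j)" using h by metis
  qed
next
  assume h: "\<forall>j<n. R j (n - 1 - j)"
  show "\<forall>i<n. R (n - 1 - i) i"
  proof (intro allI impI)
    fix j assume "j < n"
    have e1: "n - 1 - (n - 1 - j) = j" using \<open>j < n\<close> by arith
    have e2: "n - 1 - j < n" using \<open>j < n\<close> by arith
    note e1 e2
    then show "R (n - 1 - j) j" using h by metis
  qed
qed

lemma cond_equiv:
  fixes p g v y n :: nat and z c :: "nat \<Rightarrow> nat"
  assumes p0: "p > 0" and g0: "g > 0" and yp: "y < p"
    and zv: "\<forall>i<Suc n. z i < v"
    and cprop: "\<forall>i d. (int v dvd int p * int d - (int g * int (z i) - int (z (Suc i)))) \<longleftrightarrow> d mod v = c i"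
  shows "(\<forall>i<Suc n. (g^i*y mod p) mod v = z i) \<longleftrightarrow>
         y mod v = z 0 \<and> (\<forall>j<n. ((g^n*y div p) div g^j) mod g mod v = c (n - 1 - j))"
proof -
  define P where "P i = ((g^i*y mod p) mod v = z i)" for i
  define Q where "Q i = ((g*(g^i*y mod p) div p) mod v = c i)" for i
  have step: "P (Suc i) \<longleftrightarrow> Q i" if i: "i < n" and Pi: "P i" for i
  proof -
    define Y where "Y = g^i*y mod p"
    define Y' where "Y' = g^(Suc i)*y mod p"
    define D where "D = g*(g^i*y mod p) div p"
    have zi: "z i < v" "z (Suc i) < v" using zv i by auto
    have hY: "int v dvd int Y - int (z i)" using Pi zi mod_eq_dvd_int unfolding P_def Y_def by blast
    have eqY': "int Y' = int g * int Y - int p * int D" unfolding Y'_def Y_def D_def by (rule digit_a)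
    have "P (Suc i) \<longleftrightarrow> int v dvd int Y' - int (z (Suc i))"
      using zi mod_eq_dvd_int unfolding P_def Y'_def by blast
    also have "int Y' - int (z (Suc i)) = int g * (int Y - int (z i)) - (int p * int D - (int g * int (z i) - int (z (Suc i))))"
      using eqY' by (simp add: algebra_simps)
    also have "int v dvd \<dots> \<longleftrightarrow> int v dvd (int p * int D - (int g * int (z i) - int (z (Suc i))))"
    proof -
      have h: "int v dvd int g * (int Y - int (z i))" using hY by simp
      have "int v dvd (int g * (int Y - int (z i)) + - (int p * int D - (int g * int (z i) - int (z (Suc i)))))
         \<longleftrightarrow> int v dvd - (int p * int D - (int g * int (z i) - int (z (Suc i))))"
        by (rule dvd_add_right_iff[OF h])
      then show ?thesis by (simp only: diff_conv_add_uminus dvd_minus_iff)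
    qed
    also have "\<dots> \<longleftrightarrow> Q i" using cprop unfolding Q_def D_def by blast
    finally show ?thesis .
  qed
  have chain: "(\<forall>i<Suc n. P i) \<longleftrightarrow> P 0 \<and> (\<forall>i<n. Q i)"
    by (rule cond_chain) (use step in blast)
  have P0: "P 0 \<longleftrightarrow> y mod v = z 0" unfolding P_def using yp by simp
  have Qi: "Q i \<longleftrightarrow> ((g^n*y div p) div g^(n - 1 - i)) mod g mod v = c i" if "i < n" for i
  proof -
    have "g*(g^i*y mod p) div p = (g^(Suc i)*y div p) mod g" by (rule digit_mod[OF p0 g0])
    also have "g^(Suc i)*y div p = (g^n*y div p) div g^(n - Suc i)"
      using that by (intro digit_from_K[OF g0]) simp
    finally show ?thesis unfolding Q_def using that by (simp add: Suc_diff_Suc)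
  qed
  have "(\<forall>i<n. Q i) \<longleftrightarrow> (\<forall>i<n. ((g^n*y div p) div g^(n - 1 - i)) mod g mod v = c i)"
    using Qi by blast
  also have "\<dots> \<longleftrightarrow> (\<forall>j<n. ((g^n*y div p) div g^j) mod g mod v = c (n - 1 - j))"
    by (rule reindex_all[where R = "\<lambda>j i. ((g^n*y div p) div g^j) mod g mod v = c i"])
  finally show ?thesis using chain P0 unfolding P_def by simp
qed



lemma div_add_small:
  fixes G r X :: nat assumes "G > 0" "r < G"
  shows "X div G \<le> (X + r) div G \<and> (X + r) div G \<le> X div G + 1"
  using assms by (metis add.commute add_le_cancel_left bot_nat_0.not_eq_extremum div_add_self1 div_le_mono le_add2 less_imp_add_positive)

lemma cell_iff:
  fixes G p y K :: nat assumes "G > 0" "p > 0"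
  shows "G*y div p = K \<longleftrightarrow> (K*p + G - 1) div G \<le> y \<and> y < (Suc K*p + G - 1) div G"
  using div_eq_iff_bounds[OF assms(2), of G y K] ceil_le_iff[OF assms(1), of "K*p" y]
    ceil_le_iff[OF assms(1), of "Suc K*p" y] by (auto simp: not_le[symmetric])

lemma a_step:
  fixes G p q r K :: nat assumes "G > 0" "r < G" "p = q*G + r"
  shows "(K*p + G - 1) div G + q \<le> (Suc K*p + G - 1) div G \<and> (Suc K*p + G - 1) div G \<le> (K*p + G - 1) div G + q + 1"
proof -
  have eq: "Suc K*p + G - 1 = (K*p + G - 1 + r) + q*G" using assms by (simp add: algebra_simps)
  have "((K*p + G - 1 + r) + q*G) div G = q + (K*p + G - 1 + r) div G"
    by (rule div_mult_self1) (use assms in simp)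
  then have "(Suc K*p + G - 1) div G = (K*p + G - 1 + r) div G + q" unfolding eq by simp
  then show ?thesis using div_add_small[OF assms(1,2), of "K*p + G - 1"] by simp
qed

lemma a_mono:
  fixes G p K K' :: nat assumes "K \<le> K'"
  shows "(K*p + G - 1) div G \<le> (K'*p + G - 1) div G"
  using assms by (intro div_le_mono diff_le_mono add_le_mono1 mult_le_mono1)

lemma a_top:
  fixes G p :: nat assumes "G > 0"
  shows "(G*p + G - 1) div G = p"
proof -
  have eq: "G*p + G - 1 = (G - 1) + p * G" using assms by (simp add: algebra_simps)
  have "((G - 1) + p * G) div G = p + (G - 1) div G"
    by (rule div_mult_self1) (use assms in simp)
  then show ?thesis unfolding eq using assms by simp
qed

lemma a_zero:
  fixes G p :: nat assumes "G > 0"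
  shows "(0*p + G - 1) div G = 0"
  using assms by simp



theorem theorem8:
  fixes p v g t q r :: nat and z :: "nat \<Rightarrow> nat"
  assumes "prime p" and "odd p"
    and "1 < v" and "v < p - 1"
    and "g \<in> {2..p-1}" and "ord p g = p - 1"
    and "t \<ge> 1"
    and "p = q * g ^ (t - 1) + r" and "r < g ^ (t - 1)"
    and "\<forall>i<t. z i < v"
  shows "(real (g div v)) ^ (t - 1) * real (q div v) \<le> real (pattern_count p g v t z)
       \<and> real (pattern_count p g v t z)
           \<le> (real_of_int \<lceil>real g / real v\<rceil>) ^ (t - 1) * (real (q div v) + 1)"
proof -
  define n where "n = t - 1"
  have tn: "t = Suc n" using assms(7) by (simp add: n_def)
  define G where "G = g^n"
  have p2: "p \<ge> 2" using assms(1) prime_ge_2_nat by blast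
  have p0: "p > 0" using p2 by simp
  have v0: "v > 0" using assms(3) by simp
  have gb: "2 \<le> g" "g \<le> p - 1" using assms(5) by auto
  have g0: "g > 0" using gb by simp
  have G0: "G > 0" unfolding G_def using g0 by simp
  have pq: "p = q*G + r" "r < G" using assms(8,9) unfolding G_def n_def by auto
  have gp: "g < p" using gb p2 by linarith
  have vp: "v < p" using assms(4) by linarith
  have cpg: "coprime p g" using assms(1) by (rule prime_imp_coprime) (use g0 gp nat_dvd_not_less in blast)
  have cpv: "coprime p v" using assms(1) by (rule prime_imp_coprime) (use v0 vp nat_dvd_not_less in blast)
  define w where "w i = int g * int (z i) - int (z (Suc i))" for i
  have "\<forall>i. \<exists>c. c < v \<and> (\<forall>d::nat. (int v dvd int p * int d - w i) \<longleftrightarrow> d mod v = c)"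
    using solve_c[OF cpv v0] by blast
  then have "\<exists>c. \<forall>i. c i < v \<and> (\<forall>d::nat. (int v dvd int p * int d - w i) \<longleftrightarrow> d mod v = c i)"
    by (rule choice)
  then obtain c where c: "\<forall>i. c i < v \<and> (\<forall>d::nat. (int v dvd int p * int d - w i) \<longleftrightarrow> d mod v = c i)"
    by blast
  have cprop: "\<forall>i d. (int v dvd int p * int d - (int g * int (z i) - int (z (Suc i)))) \<longleftrightarrow> d mod v = c i"
    using c unfolding w_def by blast
  define PK where "PK K = (\<forall>j<n. (K div g^j) mod g mod v = c (n - 1 - j))" for K
  define \<Phi> where "\<Phi> y = (\<forall>i<t. (g^i*y mod p) mod v = z i)" for y

  have count1: "pattern_count p g v t z = card {y \<in> {1..p-1}. \<Phi> y}"
  proof -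
    define f where "f x = g^x mod p" for x
    have inj: "inj_on f {..<p-1}" using inj_power_mod[of p g] cpg assms(6) unfolding f_def by simp
    have nz: "f x \<noteq> 0" for x
    proof
      assume "f x = 0"
      then have "p dvd g^x" unfolding f_def by (simp add: dvd_eq_mod_eq_0)
      then have "p dvd g" using assms(1) prime_dvd_power by blast
      then show False using g0 gp nat_dvd_not_less by blast
    qed
    have img_sub: "f ` {..<p-1} \<subseteq> {1..p-1}"
    proof
      fix y assume "y \<in> f ` {..<p-1}"
      then obtain x where "y = f x" by blast
      moreover have "f x < p" unfolding f_def using p0 by simp
      ultimately show "y \<in> {1..p-1}" using nz[of x] by auto
    qed
    have img: "f ` {..<p-1} = {1..p-1}"
      by (rule card_subset_eq) (use img_sub card_image[OF inj] in auto)
    have dom: "{0..p-2} = {..<p-1}" using p2 by auto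
    have pw: "g^(x+i) mod p = g^i * f x mod p" for x i
      unfolding f_def by (simp add: power_add mod_mult_right_eq mult.commute)
    have "pattern_count p g v t z = card {x \<in> {..<p-1}. \<Phi> (f x)}"
      unfolding pattern_count_def dom \<Phi>_def pw ..
    also have "\<dots> = card (f ` {x \<in> {..<p-1}. \<Phi> (f x)})"
      by (rule card_image[symmetric]) (rule inj_on_subset[OF inj], auto)
    also have "f ` {x \<in> {..<p-1}. \<Phi> (f x)} = {y \<in> f ` {..<p-1}. \<Phi> y}" by auto
    finally show ?thesis unfolding img .
  qed

  have phi_eq: "\<Phi> y \<longleftrightarrow> y mod v = z 0 \<and> PK (G*y div p)" if "y < p" for y
    using cond_equiv[where p=p and g=g and v=v and y=y and n=n and z=z and c=c, OF p0 g0 that _ cprop] assms(10)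
    unfolding \<Phi>_def PK_def G_def tn by simp
  define S where "S = {y \<in> {1..p-1}. y mod v = z 0 \<and> PK (G*y div p)}"
  have count2: "card {y \<in> {1..p-1}. \<Phi> y} = card S"
  proof -
    have "{y \<in> {1..p-1}. \<Phi> y} = S" unfolding S_def using phi_eq p0 by auto
    then show ?thesis by simp
  qed
  define a where "a K = (K*p + G - 1) div G" for K
  define F where "F K = {y \<in> {1..p-1}. y mod v = z 0 \<and> a K \<le> y \<and> y < a (Suc K)}" for K
  have ci: "G*y div p = K \<longleftrightarrow> a K \<le> y \<and> y < a (Suc K)" for y K
    unfolding a_def by (rule cell_iff[OF G0 p0])
  have fib0: "{y \<in> S. G*y div p = K} = {y \<in> {1..p-1}. y mod v = z 0 \<and> PK K \<and> a K \<le> y \<and> y < a (Suc K)}" for K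
  proof -
    have "y \<in> S \<and> G*y div p = K \<longleftrightarrow> y \<in> {y \<in> {1..p-1}. y mod v = z 0 \<and> PK K \<and> a K \<le> y \<and> y < a (Suc K)}" for y
    proof
      assume h: "y \<in> S \<and> G*y div p = K"
      then have "PK K" unfolding S_def by auto
      then show "y \<in> {y \<in> {1..p-1}. y mod v = z 0 \<and> PK K \<and> a K \<le> y \<and> y < a (Suc K)}"
        using h ci[of y K] unfolding S_def by simp
    next
      assume h: "y \<in> {y \<in> {1..p-1}. y mod v = z 0 \<and> PK K \<and> a K \<le> y \<and> y < a (Suc K)}"
      then have e: "G*y div p = K" using ci[of y K] by simp
      then show "y \<in> S \<and> G*y div p = K" using h unfolding S_def by simp
    qed
    then show ?thesis by blast
  qed
  have fib: "{y \<in> S. G*y div p = K} = (if PK K then F K else {})" for K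
    unfolding fib0 F_def by simp
  have sum1: "card S = (\<Sum>K\<in>{..<G}. card {y \<in> S. G*y div p = K})"
  proof -
    have "(\<lambda>y. G*y div p) ` S \<subseteq> {..<G}"
    proof
      fix K assume "K \<in> (\<lambda>y. G*y div p) ` S"
      then obtain y where y: "y \<in> S" "K = G*y div p" by blast
      then have "y < p" unfolding S_def using p0 by auto
      then have "G*y < G*p" using G0 by simp
      then show "K \<in> {..<G}" using y(2) p0 by (simp add: div_less_iff_less_mult mult.commute)
    qed
    moreover have finS: "finite S" unfolding S_def by simp
    ultimately show ?thesis using sum.group[of S "{..<G}" "\<lambda>y. G*y div p" "\<lambda>_. 1::nat"] by simp
  qed
  define B where "B = {K \<in> {..<G}. PK K}"
  have sum2: "(\<Sum>K\<in>{..<G}. card {y \<in> S. G*y div p = K}) = (\<Sum>K\<in>B. card (F K))"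
  proof -
    have "(\<Sum>K\<in>{..<G}. card {y \<in> S. G*y div p = K}) = (\<Sum>K\<in>{..<G}. if PK K then card (F K) else 0)"
      unfolding fib by (rule sum.cong) auto
    also have "\<dots> = (\<Sum>K\<in>B. card (F K))" unfolding B_def by (rule sum.inter_filter[symmetric]) simp
    finally show ?thesis .
  qed
  have astep: "a K + q \<le> a (Suc K) \<and> a (Suc K) \<le> a K + q + 1" for K
    unfolding a_def using a_step[OF G0 pq(2) pq(1), of K] by simp
  have Fup: "card (F K) \<le> q div v + 1" for K
  proof -
    have "F K \<subseteq> {x \<in> {a K..<a K + (a (Suc K) - a K)}. x mod v = z 0}" unfolding F_def by auto
    then have "card (F K) \<le> card {x \<in> {a K..<a K + (a (Suc K) - a K)}. x mod v = z 0}"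
      by (intro card_mono) auto
    also have "\<dots> \<le> (a (Suc K) - a K + v - 1) div v"
      using cnt_bounds[of "z 0" v "a (Suc K) - a K" "a K"] assms(10) tn by auto
    also have "\<dots> \<le> (q + v) div v" using astep[of K] by (intro div_le_mono) linarith
    also have "\<dots> = q div v + 1" using v0 by simp
    finally show ?thesis .
  qed
  have Flo: "q div v \<le> card (F K)" if K: "K < G" for K
  proof (cases "K = 0")
    case False
    have a1: "1 \<le> a 1"
    proof -
      have "\<not> ((1*p + G - 1) div G \<le> 0)" using ceil_le_iff[OF G0, of "1*p" 0] p0 by simp
      then show ?thesis unfolding a_def by simp
    qed
    have aK: "a 1 \<le> a K" unfolding a_def using False by (intro a_mono) simp
    have aG: "a (Suc K) \<le> p"
    proof -
      have "a (Suc K) \<le> a G" unfolding a_def using K by (intro a_mono) simp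
      also have "a G = p" unfolding a_def using a_top[OF G0, of p] by (simp add: mult.commute)
      finally show ?thesis .
    qed
    have "F K = {x \<in> {a K..<a K + (a (Suc K) - a K)}. x mod v = z 0}"
      unfolding F_def using a1 aK aG by auto
    moreover have "(a (Suc K) - a K) div v \<le> card {x \<in> {a K..<a K + (a (Suc K) - a K)}. x mod v = z 0}"
      using cnt_bounds[of "z 0" v "a (Suc K) - a K" "a K"] assms(10) tn by auto
    moreover have "q div v \<le> (a (Suc K) - a K) div v" using astep[of K] by (intro div_le_mono) linarith
    ultimately show ?thesis by simp
  next
    case True
    have a0: "a 0 = 0" unfolding a_def using G0 by simp
    show ?thesis
    proof (cases "r = 0")
      case False
      have "\<not> ((1*p + G - 1) div G \<le> q)" using ceil_le_iff[OF G0, of "1*p" q] pq False by simp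
      then have a1: "a 1 = q + 1" using astep[of 0] a0 unfolding a_def by simp
      have "q \<le> q*G" using G0 by simp
      then have qp: "q + 1 \<le> p" using pq False by linarith
      have "{x \<in> {1..<1+q}. x mod v = z 0} \<subseteq> F K" unfolding F_def True a0 using a1 qp by auto
      then have "card {x \<in> {1..<1+q}. x mod v = z 0} \<le> card (F K)"
        unfolding F_def by (intro card_mono) auto
      moreover have "q div v \<le> card {x \<in> {1..<1+q}. x mod v = z 0}"
        using cnt_bounds[of "z 0" v q 1] assms(10) tn by auto
      ultimately show ?thesis by simp
    next
      case True2: True
      have "G dvd p" using pq True2 by simp
      then have "G = 1 \<or> G = p" using assms(1) prime_nat_iff by blast
      moreover have "G \<noteq> p"
      proof
        assume Gp: "G = p"
        have "n \<noteq> 0"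
        proof
          assume "n = 0"
          then have "G = 1" unfolding G_def by simp
          then show False using Gp p2 by simp
        qed
        then have "g dvd g^n" by (simp add: dvd_power)
        then have "g dvd p" using Gp unfolding G_def by simp
        then have "g = 1 \<or> g = p" using assms(1) prime_nat_iff by blast
        then show False using gb p2 by auto
      qed
      ultimately have G1: "G = 1" by blast
      then have qp: "q = p" using pq True2 by simp
      have a1: "a (Suc 0) = p" unfolding a_def G1 by simp
      have "F K = {x \<in> {1..<1+(p-1)}. x mod v = z 0}" unfolding F_def True a0 a1 using p0 by auto
      moreover have "(p - 1) div v \<le> card {x \<in> {1..<1+(p-1)}. x mod v = z 0}"
        using cnt_bounds[of "z 0" v "p-1" 1] assms(10) tn by auto
      moreover have "\<not> v dvd p"
      proof
        assume "v dvd p"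
        then have "v = 1 \<or> v = p" using assms(1) prime_nat_iff by blast
        then show False using assms(3) vp by auto
      qed
      then have "p mod v \<noteq> 0" by (simp add: dvd_eq_mod_eq_0)
      then have "(p - 1) div v = p div v" using p0 div_Suc[of "p - 1" v] by simp
      ultimately show ?thesis using qp by simp
    qed
  qed
  have N: "(g div v)^n \<le> card B \<and> card B \<le> ((g+v-1) div v)^n"
    using digit_count[of v g "\<lambda>j. c (n - 1 - j)" n] c v0 g0 unfolding B_def PK_def G_def by simp
  have lo: "card B * (q div v) \<le> card S"
  proof -
    have "card B * (q div v) \<le> (\<Sum>K\<in>B. card (F K))"
      using sum_bounded_below[of B "q div v" "\<lambda>K. card (F K)"] Flo unfolding B_def by auto
    then show ?thesis using sum1 sum2 by simp
  qed
  have hi: "card S \<le> card B * (q div v + 1)"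
  proof -
    have "(\<Sum>K\<in>B. card (F K)) \<le> card B * (q div v + 1)"
      using sum_bounded_above[of B "\<lambda>K. card (F K)" "q div v + 1"] Fup by auto
    then show ?thesis using sum1 sum2 by simp
  qed
  have L1: "(g div v)^n * (q div v) \<le> pattern_count p g v t z"
    using le_trans[OF mult_le_mono1[OF conjunct1[OF N]] lo] count1 count2 by simp
  have U1: "pattern_count p g v t z \<le> ((g+v-1) div v)^n * (q div v + 1)"
    using le_trans[OF hi mult_le_mono1[OF conjunct2[OF N]]] count1 count2 by simp
  have L2: "real ((g div v)^n * (q div v)) \<le> real (pattern_count p g v t z)"
    using L1 by (simp only: of_nat_le_iff)
  have U2: "real (pattern_count p g v t z) \<le> real (((g+v-1) div v)^n * (q div v + 1))"
    using U1 by (simp only: of_nat_le_iff)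
  have ce: "real_of_int \<lceil>real g / real v\<rceil> = real ((g+v-1) div v)" by (rule ceil_nat_div[OF v0])
  have A: "(real (g div v))^n * real (q div v) \<le> real (pattern_count p g v t z)"
    using L2 by (simp only: of_nat_mult of_nat_power)
  have B: "real (pattern_count p g v t z) \<le> (real ((g+v-1) div v))^n * (real (q div v) + 1)"
    using U2 by (simp only: of_nat_mult of_nat_power of_nat_add of_nat_1)
  show ?thesis unfolding ce n_def[symmetric] using A B by (intro conjI)
qed

end
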